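(* Let $n\ge2$, $D_0>0$ and $\alpha>(n-1)\beta\ge0$, and let $p^a\in\mathbb{R}^n_{\ge0}$. For each fixed payment vector $\bar p^d=(p^d_2,\dots,p^d_n)\in\mathbb{R}^{n-1}$, the collusion game described below has a unique pure-strategy Nash equilibrium. It has the following properties. - The colluding pair's price is $$p_1=p^s_1+p^c_1=-\frac{p^a_1}{2}+\frac{D_0}{2(\alpha-(n-1)\beta)}.$$ - For $i=2,\dots,n$, $p^s_i=g_i-p^d_i$ and $p^c_i=h_i+p^d_i$, where the constants $g_i,h_i$ depend only on $p^a,D_0,\alpha,\beta$. - The equilibrium demand vector, the revenues per unit demand, and hence the total revenues of the colluding pair and of the other CPs, do not depend on $\bar p^d$. Thus the equilibrium is unique up to a free choice of $\bar p^d$.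
   Context: One ISP and $n$ CPs, where CP 1 has an exclusive contract with the ISP. The ISP together with CP 1 forms a single "colluding pair" player $\overline{ISP}$, which chooses the vector $$\bar p^s=(p_1,p^s_2,\dots,p^s_n),\qquad p_1=p^s_1+p^c_1,$$ where $p_1$ is the price charged to internauts of CP 1. Each CP $i\ge2$ chooses $p^c_i\in\mathbb{R}$. The payments $p^d_i$ ($i\ge2$) from CP $i$ to the ISP are fixed beforehand by a regulator (ex ante regulation). $p^a_i\ge0$ are advertising revenues per unit demand. With $p_i=p^s_i+p^c_i$ and $D_i=D_0-\alpha p_i+\beta\sum_{j\ne i}p_j$, the payoffs are $$U_{\overline{ISP}}=D_1(p_1+p^a_1)+\sum_{i\ge2}D_i(p^s_i+p^d_i),\qquad U_{CP,i}=D_i(p^c_i+p^a_i-p^d_i)\ \ (i\ge2),$$ and all strategies range over the reals. *)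

theory Defs
  imports Main "HOL.Real"
begin

text \<open>CPs are indexed by 1..n. The colluding pair's strategy is a function
  s :: nat => real with s 1 = p_1 (price to internauts of CP 1) and
  s i = p^s_i for i = 2..n; other values are irrelevant.
  The CPs' strategies are pc :: nat => real, pc i = p^c_i for i = 2..n.
  pd i = p^d_i (i = 2..n) are the regulated payments, pa i = p^a_i.\<close>

definition price :: "(nat \<Rightarrow> real) \<Rightarrow> (nat \<Rightarrow> real) \<Rightarrow> nat \<Rightarrow> real" where
  "price s pc i = (if i = 1 then s 1 else s i + pc i)"

definition demand :: "nat \<Rightarrow> real \<Rightarrow> real \<Rightarrow> real \<Rightarrow> (nat \<Rightarrow> real) \<Rightarrow> nat \<Rightarrow> real" where
  "demand n D0 \<alpha> \<beta> p i = D0 - \<alpha> * p i + \<beta> * (\<Sum>j\<in>{1..n} - {i}. p j)"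

definition U_ISP :: "nat \<Rightarrow> real \<Rightarrow> real \<Rightarrow> real \<Rightarrow> (nat \<Rightarrow> real) \<Rightarrow> (nat \<Rightarrow> real)
    \<Rightarrow> (nat \<Rightarrow> real) \<Rightarrow> (nat \<Rightarrow> real) \<Rightarrow> real" where
  "U_ISP n D0 \<alpha> \<beta> pa pd s pc =
     demand n D0 \<alpha> \<beta> (price s pc) 1 * (s 1 + pa 1)
     + (\<Sum>i\<in>{2..n}. demand n D0 \<alpha> \<beta> (price s pc) i * (s i + pd i))"

definition U_CP :: "nat \<Rightarrow> real \<Rightarrow> real \<Rightarrow> real \<Rightarrow> (nat \<Rightarrow> real) \<Rightarrow> (nat \<Rightarrow> real)
    \<Rightarrow> (nat \<Rightarrow> real) \<Rightarrow> (nat \<Rightarrow> real) \<Rightarrow> nat \<Rightarrow> real" where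
  "U_CP n D0 \<alpha> \<beta> pa pd s pc i =
     demand n D0 \<alpha> \<beta> (price s pc) i * (pc i + pa i - pd i)"

definition is_NE :: "nat \<Rightarrow> real \<Rightarrow> real \<Rightarrow> real \<Rightarrow> (nat \<Rightarrow> real) \<Rightarrow> (nat \<Rightarrow> real)
    \<Rightarrow> (nat \<Rightarrow> real) \<Rightarrow> (nat \<Rightarrow> real) \<Rightarrow> bool" where
  "is_NE n D0 \<alpha> \<beta> pa pd s pc \<longleftrightarrow>
     (\<forall>s'. U_ISP n D0 \<alpha> \<beta> pa pd s' pc \<le> U_ISP n D0 \<alpha> \<beta> pa pd s pc) \<and>
     (\<forall>i\<in>{2..n}. \<forall>x. U_CP n D0 \<alpha> \<beta> pa pd s (pc(i := x)) i \<le> U_CP n D0 \<alpha> \<beta> pa pd s pc i)"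

end

theory Submission imports Defs "HOL-Analysis.Convex" begin

definition SS :: "nat \<Rightarrow> (nat \<Rightarrow> real) \<Rightarrow> real" where
  "SS n f = (\<Sum>j\<in>{1..n}. f j)"

definition Qv :: "(nat \<Rightarrow> real) \<Rightarrow> (nat \<Rightarrow> real) \<Rightarrow> (nat \<Rightarrow> real) \<Rightarrow> nat \<Rightarrow> real" where
  "Qv pa pd s k = (if k = 1 then s 1 + pa 1 else s k + pd k)"

lemma demand_eq:
  assumes "k \<in> {1..n}"
  shows "demand n D0 \<alpha> \<beta> p k = D0 - (\<alpha>+\<beta>) * p k + \<beta> * SS n p"
proof -
  have "(\<Sum>j\<in>{1..n} - {k}. p j) = SS n p - p k"
    unfolding SS_def using assms by (simp add: sum_diff1)
  then show ?thesis unfolding demand_def by (simp only:) (simp add: algebra_simps)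
qed

lemma U_ISP_alt:
  assumes "n \<ge> 1"
  shows "U_ISP n D0 \<alpha> \<beta> pa pd s pc = (\<Sum>i\<in>{1..n}. demand n D0 \<alpha> \<beta> (price s pc) i * Qv pa pd s i)"
proof -
  have e: "{1..n} = insert 1 {2..n}" using assms by auto
  have "(\<Sum>i\<in>{2..n}. demand n D0 \<alpha> \<beta> (price s pc) i * (s i + pd i))
      = (\<Sum>i\<in>{2..n}. demand n D0 \<alpha> \<beta> (price s pc) i * Qv pa pd s i)"
    by (rule sum.cong) (auto simp: Qv_def)
  then show ?thesis unfolding U_ISP_def e by (simp add: Qv_def)
qed

lemma SS_add: "SS n (\<lambda>k. f k + g k) = SS n f + SS n g"
  unfolding SS_def by (simp add: sum.distrib)

lemma ISP_expansion:
  assumes "n \<ge> 1"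
  shows "U_ISP n D0 \<alpha> \<beta> pa pd (\<lambda>j. s j + d j) pc - U_ISP n D0 \<alpha> \<beta> pa pd s pc
    = (\<Sum>i\<in>{1..n}. (demand n D0 \<alpha> \<beta> (price s pc) i - (\<alpha>+\<beta>) * Qv pa pd s i + \<beta> * SS n (Qv pa pd s)) * d i)
      - (\<alpha>+\<beta>) * (\<Sum>i\<in>{1..n}. (d i)^2) + \<beta> * (SS n d)^2"
proof -
  let ?P = "price s pc" and ?Q = "Qv pa pd s"
  have pr: "price (\<lambda>j. s j + d j) pc = (\<lambda>k. ?P k + d k)"
    by (auto simp: price_def)
  have qq: "Qv pa pd (\<lambda>j. s j + d j) = (\<lambda>k. ?Q k + d k)"
    by (auto simp: Qv_def)
  have "U_ISP n D0 \<alpha> \<beta> pa pd (\<lambda>j. s j + d j) pc - U_ISP n D0 \<alpha> \<beta> pa pd s pc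
     = (\<Sum>i\<in>{1..n}. (D0 - (\<alpha>+\<beta>) * (?P i + d i) + \<beta> * (SS n ?P + SS n d)) * (?Q i + d i)
          - (D0 - (\<alpha>+\<beta>) * ?P i + \<beta> * SS n ?P) * ?Q i)"
    unfolding U_ISP_alt[OF assms] pr qq sum_subtractf[symmetric]
    by (rule sum.cong) (simp_all add: demand_eq SS_add)
  also have "\<dots> = (\<Sum>i\<in>{1..n}. (D0 - (\<alpha>+\<beta>) * ?P i + \<beta> * SS n ?P - (\<alpha>+\<beta>) * ?Q i + \<beta> * SS n ?Q) * d i
       - (\<alpha>+\<beta>) * (d i)^2 + \<beta> * SS n d * d i + \<beta> * (SS n d * ?Q i - SS n ?Q * d i))"
    by (rule sum.cong) (simp_all add: algebra_simps power2_eq_square)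
  also have "\<dots> = (\<Sum>i\<in>{1..n}. (D0 - (\<alpha>+\<beta>) * ?P i + \<beta> * SS n ?P - (\<alpha>+\<beta>) * ?Q i + \<beta> * SS n ?Q) * d i)
       - (\<alpha>+\<beta>) * (\<Sum>i\<in>{1..n}. (d i)^2) + \<beta> * SS n d * SS n d + \<beta> * (SS n d * SS n ?Q - SS n ?Q * SS n d)"
    by (simp add: sum.distrib sum_subtractf sum_distrib_left SS_def right_diff_distrib)
  also have "\<dots> = (\<Sum>i\<in>{1..n}. (demand n D0 \<alpha> \<beta> ?P i - (\<alpha>+\<beta>) * ?Q i + \<beta> * SS n ?Q) * d i)
      - (\<alpha>+\<beta>) * (\<Sum>i\<in>{1..n}. (d i)^2) + \<beta> * (SS n d)^2"
    by (simp add: demand_eq power2_eq_square)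
  finally show ?thesis .
qed

lemma SS_delta: "(k::nat) \<in> {1..n} \<Longrightarrow> SS n (\<lambda>j. if j = k then t else 0) = t"
  unfolding SS_def by simp

lemma sum_delta_gen: fixes k n :: nat assumes "k \<in> {1..n}" "\<And>i. i \<noteq> k \<Longrightarrow> g i = 0"
  shows "(\<Sum>i\<in>{1..n}. g i) = (g k::real)"
proof -
  have "(\<Sum>i\<in>{1..n}. g i) = (\<Sum>i\<in>{1..n}. if i = k then g k else 0)"
    by (rule sum.cong) (auto simp: assms(2))
  also have "\<dots> = g k" using assms(1) sum.delta[of "{1..n}" k "\<lambda>_. g k"] by simp
  finally show ?thesis .
qed

lemma sum_delta_mult: "(k::nat) \<in> {1..n} \<Longrightarrow> (\<Sum>i\<in>{1..n}. f i * (if i = k then t else 0)) = f k * (t::real)"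
  by (subst sum_delta_gen[of k]) auto

lemma CP_expansion:
  assumes "i \<in> {2..n}"
  shows "U_CP n D0 \<alpha> \<beta> pa pd s (pc(i := x)) i - U_CP n D0 \<alpha> \<beta> pa pd s pc i
    = (x - pc i) * (demand n D0 \<alpha> \<beta> (price s pc) i - \<alpha> * (pc i + pa i - pd i)) - \<alpha> * (x - pc i)^2"
proof -
  let ?t = "x - pc i"
  have pr: "price s (pc(i := x)) = (\<lambda>k. price s pc k + (if k = i then ?t else 0))"
    using assms by (auto simp: price_def)
  have i: "i \<in> {1..n}" using assms by auto
  have ss: "SS n (price s (pc(i := x))) = SS n (price s pc) + ?t"
    unfolding pr SS_add SS_delta[OF i] ..
  show ?thesis unfolding U_CP_def demand_eq[OF i] ss
    using assms by (simp add: price_def algebra_simps power2_eq_square)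
qed

lemma quad_zero:
  fixes G \<alpha> :: real
  assumes "\<alpha> > 0" "\<And>t. t * G - \<alpha> * t^2 \<le> 0"
  shows "G = 0"
proof -
  have "(G/(2*\<alpha>)) * G - \<alpha> * (G/(2*\<alpha>))^2 = G^2 / (4*\<alpha>)"
    using assms(1) by (simp add: field_simps power2_eq_square)
  with assms(2)[of "G/(2*\<alpha>)"] have "G^2 / (4*\<alpha>) \<le> 0" by simp
  then have "G^2 \<le> 0" using assms(1) by (simp add: divide_le_0_iff)
  then show ?thesis by simp
qed

definition FOC_ISP where
  "FOC_ISP n D0 \<alpha> \<beta> pa pd s pc \<longleftrightarrow> (\<forall>k\<in>{1..n}.
     demand n D0 \<alpha> \<beta> (price s pc) k - (\<alpha>+\<beta>) * Qv pa pd s k + \<beta> * SS n (Qv pa pd s) = 0)"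

definition FOC_CP where
  "FOC_CP n D0 \<alpha> \<beta> pa pd s pc \<longleftrightarrow> (\<forall>i\<in>{2..n}.
     demand n D0 \<alpha> \<beta> (price s pc) i = \<alpha> * (pc i + pa i - pd i))"

lemma NE_iff:
  assumes n: "n \<ge> 2" and b: "\<beta> \<ge> 0" and a: "\<alpha> > (real n - 1) * \<beta>"
  shows "is_NE n D0 \<alpha> \<beta> pa pd s pc \<longleftrightarrow> FOC_ISP n D0 \<alpha> \<beta> pa pd s pc \<and> FOC_CP n D0 \<alpha> \<beta> pa pd s pc"
proof -
  have n1: "n \<ge> 1" using n by simp
  have "real n - 1 \<ge> 0" using n by simp
  then have "(real n - 1) * \<beta> \<ge> 0" using b by simp
  then have a0: "\<alpha> > 0" using a by linarith
  let ?G = "\<lambda>k. demand n D0 \<alpha> \<beta> (price s pc) k - (\<alpha>+\<beta>) * Qv pa pd s k + \<beta> * SS n (Qv pa pd s)"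
  have isp: "(\<forall>s'. U_ISP n D0 \<alpha> \<beta> pa pd s' pc \<le> U_ISP n D0 \<alpha> \<beta> pa pd s pc) \<longleftrightarrow> FOC_ISP n D0 \<alpha> \<beta> pa pd s pc"
  proof
    assume H: "\<forall>s'. U_ISP n D0 \<alpha> \<beta> pa pd s' pc \<le> U_ISP n D0 \<alpha> \<beta> pa pd s pc"
    show "FOC_ISP n D0 \<alpha> \<beta> pa pd s pc" unfolding FOC_ISP_def
    proof
      fix k assume k: "k \<in> {1..n}"
      show "?G k = 0"
      proof (rule quad_zero[OF a0])
        fix t
        let ?d = "\<lambda>j. if j = k then t else (0::real)"
        have "(\<Sum>i\<in>{1..n}. (?d i)^2) = t^2"
          using k by (subst sum_delta_gen[of k]) auto
        then have "U_ISP n D0 \<alpha> \<beta> pa pd (\<lambda>j. s j + ?d j) pc - U_ISP n D0 \<alpha> \<beta> pa pd s pc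
             = t * ?G k - \<alpha> * t^2"
          unfolding ISP_expansion[OF n1] sum_delta_mult[OF k] SS_delta[OF k]
          by (simp add: algebra_simps)
        moreover have "U_ISP n D0 \<alpha> \<beta> pa pd (\<lambda>j. s j + ?d j) pc \<le> U_ISP n D0 \<alpha> \<beta> pa pd s pc"
          using H by blast
        ultimately show "t * ?G k - \<alpha> * t^2 \<le> 0" by linarith
      qed
    qed
  next
    assume F: "FOC_ISP n D0 \<alpha> \<beta> pa pd s pc"
    show "\<forall>s'. U_ISP n D0 \<alpha> \<beta> pa pd s' pc \<le> U_ISP n D0 \<alpha> \<beta> pa pd s pc"
    proof
      fix s'
      define d where "d = (\<lambda>j. s' j - s j)"
      have s': "s' = (\<lambda>j. s j + d j)" unfolding d_def by auto
      have z: "(\<Sum>i\<in>{1..n}. ?G i * d i) = 0"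
        using F unfolding FOC_ISP_def by simp
      have cs: "(SS n d)^2 \<le> (\<Sum>i\<in>{1..n}. (d i)^2) * real n"
        unfolding SS_def using sum_squared_le_sum_of_squares[of d "{1..n}"] by simp
      have nb: "\<beta> * real n \<le> \<alpha> + \<beta>" using a by (simp add: algebra_simps)
      have sq0: "0 \<le> (\<Sum>i\<in>{1..n}. (d i)^2)" by (simp add: sum_nonneg)
      have "\<beta> * (SS n d)^2 \<le> \<beta> * ((\<Sum>i\<in>{1..n}. (d i)^2) * real n)"
        using cs b by (simp add: mult_left_mono)
      also have "\<dots> \<le> (\<alpha>+\<beta>) * (\<Sum>i\<in>{1..n}. (d i)^2)"
        using mult_right_mono[OF nb sq0] by (simp add: algebra_simps)
      finally have "\<beta> * (SS n d)^2 \<le> (\<alpha>+\<beta>) * (\<Sum>i\<in>{1..n}. (d i)^2)" .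
      then show "U_ISP n D0 \<alpha> \<beta> pa pd s' pc \<le> U_ISP n D0 \<alpha> \<beta> pa pd s pc"
        using ISP_expansion[OF n1, of D0 \<alpha> \<beta> pa pd s d pc] z unfolding s' by linarith
    qed
  qed
  have cp: "(\<forall>i\<in>{2..n}. \<forall>x. U_CP n D0 \<alpha> \<beta> pa pd s (pc(i := x)) i \<le> U_CP n D0 \<alpha> \<beta> pa pd s pc i)
      \<longleftrightarrow> FOC_CP n D0 \<alpha> \<beta> pa pd s pc"
  proof
    assume H: "\<forall>i\<in>{2..n}. \<forall>x. U_CP n D0 \<alpha> \<beta> pa pd s (pc(i := x)) i \<le> U_CP n D0 \<alpha> \<beta> pa pd s pc i"
    show "FOC_CP n D0 \<alpha> \<beta> pa pd s pc" unfolding FOC_CP_def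
    proof
      fix i assume i: "i \<in> {2..n}"
      have "demand n D0 \<alpha> \<beta> (price s pc) i - \<alpha> * (pc i + pa i - pd i) = 0"
      proof (rule quad_zero[OF a0])
        fix t
        show "t * (demand n D0 \<alpha> \<beta> (price s pc) i - \<alpha> * (pc i + pa i - pd i)) - \<alpha> * t^2 \<le> 0"
        proof -
          have "U_CP n D0 \<alpha> \<beta> pa pd s (pc(i := pc i + t)) i \<le> U_CP n D0 \<alpha> \<beta> pa pd s pc i"
            using H i by blast
          then show ?thesis using CP_expansion[OF i, of D0 \<alpha> \<beta> pa pd s pc "pc i + t"] by simp
        qed
      qed
      then show "demand n D0 \<alpha> \<beta> (price s pc) i = \<alpha> * (pc i + pa i - pd i)" by simp
    qed
  next
    assume F: "FOC_CP n D0 \<alpha> \<beta> pa pd s pc"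
    show "\<forall>i\<in>{2..n}. \<forall>x. U_CP n D0 \<alpha> \<beta> pa pd s (pc(i := x)) i \<le> U_CP n D0 \<alpha> \<beta> pa pd s pc i"
    proof (intro ballI allI)
      fix i x assume i: "i \<in> {2..n}"
      have "0 \<le> \<alpha> * (x - pc i)^2" using a0 by simp
      then show "U_CP n D0 \<alpha> \<beta> pa pd s (pc(i := x)) i \<le> U_CP n D0 \<alpha> \<beta> pa pd s pc i"
        using CP_expansion[OF i, of D0 \<alpha> \<beta> pa pd s pc x] F i unfolding FOC_CP_def by simp
    qed
  qed
  show ?thesis unfolding is_NE_def isp cp ..
qed

definition Kc :: "nat \<Rightarrow> real \<Rightarrow> real \<Rightarrow> real \<Rightarrow> real" where
  "Kc n D0 \<alpha> \<beta> = D0 / (\<alpha> - (real n - 1) * \<beta>)"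
definition bv :: "nat \<Rightarrow> real \<Rightarrow> real \<Rightarrow> real \<Rightarrow> (nat \<Rightarrow> real) \<Rightarrow> nat \<Rightarrow> real" where
  "bv n D0 \<alpha> \<beta> pa k = D0 + (\<alpha>+\<beta>) * pa k - \<beta> * SS n pa"
definition Srs :: "nat \<Rightarrow> real \<Rightarrow> real \<Rightarrow> real \<Rightarrow> (nat \<Rightarrow> real) \<Rightarrow> real" where
  "Srs n D0 \<alpha> \<beta> pa = (\<Sum>k\<in>{2..n}. bv n D0 \<alpha> \<beta> pa k) / (3*\<alpha> - (real n - 2) * \<beta>)"
definition rstar :: "nat \<Rightarrow> real \<Rightarrow> real \<Rightarrow> real \<Rightarrow> (nat \<Rightarrow> real) \<Rightarrow> nat \<Rightarrow> real" where
  "rstar n D0 \<alpha> \<beta> pa k = (if k = 1 then 0 else (bv n D0 \<alpha> \<beta> pa k + \<beta> * Srs n D0 \<alpha> \<beta> pa) / (3*\<alpha>+\<beta>))"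
definition Qstar :: "nat \<Rightarrow> real \<Rightarrow> real \<Rightarrow> real \<Rightarrow> (nat \<Rightarrow> real) \<Rightarrow> nat \<Rightarrow> real" where
  "Qstar n D0 \<alpha> \<beta> pa k = (Kc n D0 \<alpha> \<beta> - rstar n D0 \<alpha> \<beta> pa k + pa k) / 2"

definition EQS where
  "EQS n D0 \<alpha> \<beta> pa Q r \<longleftrightarrow>
    (\<forall>k\<in>{1..n}. D0 - (\<alpha>+\<beta>) * (Q k + r k - pa k) + \<beta> * (SS n Q + SS n r - SS n pa)
        - (\<alpha>+\<beta>) * Q k + \<beta> * SS n Q = 0)
  \<and> (\<forall>k\<in>{2..n}. D0 - (\<alpha>+\<beta>) * (Q k + r k - pa k) + \<beta> * (SS n Q + SS n r - SS n pa) = \<alpha> * r k)"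

lemma SS_split: "n \<ge> 1 \<Longrightarrow> r 1 = 0 \<Longrightarrow> SS n r = (\<Sum>k\<in>{2..n}. r k)"
proof -
  assume "n \<ge> 1" "r 1 = 0"
  then have e: "{1..n} = insert 1 {2..n}" by auto
  show ?thesis unfolding SS_def e using \<open>r 1 = 0\<close> by simp
qed

lemma card2: "n \<ge> 2 \<Longrightarrow> real (card {2..n}) = real n - 1"
  by (simp add: of_nat_diff)

lemma solve_imp:
  assumes n: "n \<ge> 2" and b: "\<beta> \<ge> 0" and a: "\<alpha> > (real n - 1) * \<beta>"
    and r1: "r 1 = 0" and E: "EQS n D0 \<alpha> \<beta> pa Q r"
  shows "\<forall>k\<in>{1..n}. Q k = Qstar n D0 \<alpha> \<beta> pa k \<and> r k = rstar n D0 \<alpha> \<beta> pa k"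
proof -
  define N where "N = real n"
  define c where "c = \<alpha> - (N - 1) * \<beta>"
  define K where "K = Kc n D0 \<alpha> \<beta>"
  define Y where "Y = 2 * SS n Q + SS n r - SS n pa"
  have "N - 1 \<ge> 1" using n unfolding N_def by simp
  then have "(N - 1) * \<beta> \<ge> 0" using b by simp
  then have a0: "\<alpha> > 0" using a unfolding N_def by linarith
  have c0: "c > 0" using a unfolding c_def N_def by simp
  have ab: "\<alpha> + \<beta> > 0" using a0 b by simp
  have D0K: "D0 = c * K" unfolding K_def Kc_def c_def N_def using c0 unfolding c_def N_def by simp
  have E1: "\<forall>k\<in>{1..n}. (\<alpha>+\<beta>) * (2 * Q k + r k - pa k) = D0 + \<beta> * Y"
  proof
    fix k assume k: "k \<in> {1..n}"
    have "D0 - (\<alpha>+\<beta>) * (Q k + r k - pa k) + \<beta> * (SS n Q + SS n r - SS n pa)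
        - (\<alpha>+\<beta>) * Q k + \<beta> * SS n Q = 0" using E k unfolding EQS_def by blast
    then show "(\<alpha>+\<beta>) * (2 * Q k + r k - pa k) = D0 + \<beta> * Y"
      unfolding Y_def by (simp add: algebra_simps)
  qed
  have "(\<Sum>k\<in>{1..n}. (\<alpha>+\<beta>) * (2 * Q k + r k - pa k)) = (\<Sum>k\<in>{1..n}. D0 + \<beta> * Y)"
    using E1 by (intro sum.cong) auto 
  moreover have "(\<Sum>k\<in>{1..n}. (\<alpha>+\<beta>) * (2 * Q k + r k - pa k)) = (\<alpha>+\<beta>) * Y"
    unfolding Y_def SS_def by (simp add: sum_distrib_left[symmetric] sum.distrib sum_subtractf)
  moreover have "(\<Sum>k\<in>{1..n}. D0 + \<beta> * Y) = N * (D0 + \<beta> * Y)" unfolding N_def by simp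
  ultimately have "(\<alpha>+\<beta>) * Y = N * (D0 + \<beta> * Y)" by simp
  then have "c * Y = N * D0" unfolding c_def by (simp add: algebra_simps)
  then have Y: "Y = N * K" using D0K c0 by simp
  have Qk: "\<forall>k\<in>{1..n}. Q k = (K - r k + pa k) / 2"
  proof
    fix k assume k: "k \<in> {1..n}"
    have "(\<alpha>+\<beta>) * (2 * Q k + r k - pa k) = (\<alpha>+\<beta>) * K"
      using E1 k unfolding Y D0K c_def by (simp add: algebra_simps)
    then have "2 * Q k + r k - pa k = K" using ab by simp
    then show "Q k = (K - r k + pa k) / 2" by simp
  qed
  have SQ: "SS n Q = (N * K - SS n r + SS n pa) / 2" using Y unfolding Y_def by simp
  have rk: "\<forall>k\<in>{2..n}. (3*\<alpha>+\<beta>) * r k - \<beta> * SS n r = bv n D0 \<alpha> \<beta> pa k"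
  proof
    fix k assume k: "k \<in> {2..n}"
    then have k1: "k \<in> {1..n}" by auto
    have e1: "D0 - (\<alpha>+\<beta>) * (Q k + r k - pa k) + \<beta> * (SS n Q + SS n r - SS n pa)
        - (\<alpha>+\<beta>) * Q k + \<beta> * SS n Q = 0" using E k1 unfolding EQS_def by blast
    have e2: "D0 - (\<alpha>+\<beta>) * (Q k + r k - pa k) + \<beta> * (SS n Q + SS n r - SS n pa) = \<alpha> * r k"
      using E k unfolding EQS_def by blast
    have "\<alpha> * r k = (\<alpha>+\<beta>) * Q k - \<beta> * SS n Q"
      using e1 e2 by linarith
    then have "\<alpha> * r k = (\<alpha>+\<beta>) * ((K - r k + pa k) / 2) - \<beta> * ((N * K - SS n r + SS n pa) / 2)"
      using Qk k1 SQ by simp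
    then show "(3*\<alpha>+\<beta>) * r k - \<beta> * SS n r = bv n D0 \<alpha> \<beta> pa k"
      unfolding bv_def D0K c_def by (simp add: field_simps)
  qed
  have Sr: "SS n r = (\<Sum>k\<in>{2..n}. r k)" using SS_split[of n r] r1 n by simp
  have "(\<Sum>k\<in>{2..n}. (3*\<alpha>+\<beta>) * r k - \<beta> * SS n r) = (\<Sum>k\<in>{2..n}. bv n D0 \<alpha> \<beta> pa k)"
    using rk by (intro sum.cong) auto
  moreover have "(\<Sum>k\<in>{2..n}. (3*\<alpha>+\<beta>) * r k - \<beta> * SS n r) = (3*\<alpha>+\<beta>) * SS n r - (N - 1) * \<beta> * SS n r"
    unfolding Sr using n by (simp add: sum_subtractf sum_distrib_left[symmetric] of_nat_diff N_def)
  ultimately have "(3*\<alpha> - (N - 2) * \<beta>) * SS n r = (\<Sum>k\<in>{2..n}. bv n D0 \<alpha> \<beta> pa k)"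
    by (simp add: algebra_simps)
  moreover have "3*\<alpha> - (N - 2) * \<beta> > 0"
  proof -
    have "(N - 2) * \<beta> = (N - 1) * \<beta> - \<beta>" by (simp add: algebra_simps)
    then show ?thesis using c0 a0 b unfolding c_def by linarith
  qed
  ultimately have SrS: "SS n r = Srs n D0 \<alpha> \<beta> pa" unfolding Srs_def N_def by (simp add: field_simps)
  have R: "\<forall>k\<in>{1..n}. r k = rstar n D0 \<alpha> \<beta> pa k"
  proof
    fix k assume k: "k \<in> {1..n}"
    show "r k = rstar n D0 \<alpha> \<beta> pa k"
    proof (cases "k = 1")
      case True then show ?thesis using r1 by (simp add: rstar_def)
    next
      case False
      then have "k \<in> {2..n}" using k by auto
      then have "(3*\<alpha>+\<beta>) * r k = bv n D0 \<alpha> \<beta> pa k + \<beta> * Srs n D0 \<alpha> \<beta> pa"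
        using rk SrS by (simp add: algebra_simps)
      moreover have "3*\<alpha>+\<beta> > 0" using a0 b by simp
      ultimately show ?thesis using False unfolding rstar_def by (simp add: field_simps)
    qed
  qed
  show ?thesis using R Qk unfolding Qstar_def K_def by simp
qed

lemma alg1:
  fixes D0 \<alpha> \<beta> K N R S x p :: real
  assumes "D0 = (\<alpha> - (N - 1) * \<beta>) * K"
  shows "D0 - (\<alpha>+\<beta>) * ((K - x + p) / 2 + x - p) + \<beta> * ((N * K - R + S) / 2 + R - S)
        - (\<alpha>+\<beta>) * ((K - x + p) / 2) + \<beta> * ((N * K - R + S) / 2) = 0"
  using assms by (simp add: field_simps)

lemma alg2:
  fixes D0 \<alpha> \<beta> K N R S x p :: real
  assumes "D0 = (\<alpha> - (N - 1) * \<beta>) * K"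
    and "(3*\<alpha>+\<beta>) * x = D0 + (\<alpha>+\<beta>) * p - \<beta> * S + \<beta> * R"
  shows "D0 - (\<alpha>+\<beta>) * ((K - x + p) / 2 + x - p) + \<beta> * ((N * K - R + S) / 2 + R - S) = \<alpha> * x"
  using assms by (simp add: field_simps)

lemma solve_rev:
  assumes n: "n \<ge> 2" and b: "\<beta> \<ge> 0" and a: "\<alpha> > (real n - 1) * \<beta>"
  shows "EQS n D0 \<alpha> \<beta> pa (Qstar n D0 \<alpha> \<beta> pa) (rstar n D0 \<alpha> \<beta> pa)"
proof -
  define N where "N = real n"
  define c where "c = \<alpha> - (N - 1) * \<beta>"
  define K where "K = Kc n D0 \<alpha> \<beta>"
  define Sb where "Sb = (\<Sum>k\<in>{2..n}. bv n D0 \<alpha> \<beta> pa k)"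
  define R where "R = Srs n D0 \<alpha> \<beta> pa"
  let ?Q = "Qstar n D0 \<alpha> \<beta> pa" and ?r = "rstar n D0 \<alpha> \<beta> pa"
  have "N - 1 \<ge> 1" using n unfolding N_def by simp
  then have "(N - 1) * \<beta> \<ge> 0" using b by simp
  then have a0: "\<alpha> > 0" using a unfolding N_def by linarith
  have c0: "c > 0" using a unfolding c_def N_def by simp
  have D0K: "D0 = c * K" unfolding K_def Kc_def c_def N_def using c0 unfolding c_def N_def by simp
  have d3: "3*\<alpha>+\<beta> > 0" using a0 b by simp
  have d2: "3*\<alpha> - (N - 2) * \<beta> > 0"
  proof -
    have "(N - 2) * \<beta> = (N - 1) * \<beta> - \<beta>" by (simp add: algebra_simps)
    then show ?thesis using c0 a0 b unfolding c_def by linarith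
  qed
  have Rdef: "(3*\<alpha> - (N - 2) * \<beta>) * R = Sb"
    unfolding R_def Srs_def Sb_def N_def using d2 unfolding N_def by simp
  have r1: "?r 1 = 0" by (simp add: rstar_def)
  have "SS n ?r = (\<Sum>k\<in>{2..n}. ?r k)" using SS_split[of n ?r] r1 n by simp
  also have "\<dots> = (\<Sum>k\<in>{2..n}. (bv n D0 \<alpha> \<beta> pa k + \<beta> * R) / (3*\<alpha>+\<beta>))"
    by (intro sum.cong) (auto simp: rstar_def R_def)
  also have "\<dots> = (Sb + (N - 1) * \<beta> * R) / (3*\<alpha>+\<beta>)"
    unfolding Sb_def using n by (simp add: sum_divide_distrib[symmetric] sum.distrib of_nat_diff N_def)
  also have "\<dots> = R"
    using d3 Rdef by (simp add: field_simps)
  finally have Sr: "SS n ?r = R" .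
  have Qk: "\<And>k. ?Q k = (K - ?r k + pa k) / 2" unfolding Qstar_def K_def by simp
  have "SS n ?Q = (\<Sum>k\<in>{1..n}. (K - ?r k + pa k) / 2)" unfolding SS_def Qk ..
  also have "\<dots> = (N * K - SS n ?r + SS n pa) / 2"
    unfolding SS_def N_def by (simp add: sum_divide_distrib[symmetric] sum.distrib sum_subtractf)
  finally have SQ: "SS n ?Q = (N * K - R + SS n pa) / 2" using Sr by simp
  have rk: "\<And>k. k \<in> {2..n} \<Longrightarrow> (3*\<alpha>+\<beta>) * ?r k = bv n D0 \<alpha> \<beta> pa k + \<beta> * R"
    using d3 by (auto simp: rstar_def R_def)
  show ?thesis unfolding EQS_def
  proof (intro conjI ballI)
    fix k assume k: "k \<in> {1..n}"
    show "D0 - (\<alpha>+\<beta>) * (?Q k + ?r k - pa k) + \<beta> * (SS n ?Q + SS n ?r - SS n pa)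
        - (\<alpha>+\<beta>) * ?Q k + \<beta> * SS n ?Q = 0"
      unfolding SQ Sr Qk using D0K unfolding c_def by (rule alg1)
  next
    fix k assume k: "k \<in> {2..n}"
    have "(3*\<alpha>+\<beta>) * ?r k = bv n D0 \<alpha> \<beta> pa k + \<beta> * R" using rk[OF k] .
    then show "D0 - (\<alpha>+\<beta>) * (?Q k + ?r k - pa k) + \<beta> * (SS n ?Q + SS n ?r - SS n pa) = \<alpha> * ?r k"
      unfolding SQ Sr Qk using alg2[OF D0K[unfolded c_def]] unfolding bv_def by blast
  qed
qed


definition rv :: "(nat \<Rightarrow> real) \<Rightarrow> (nat \<Rightarrow> real) \<Rightarrow> (nat \<Rightarrow> real) \<Rightarrow> nat \<Rightarrow> real" where
  "rv pa pd pc k = (if k = 1 then 0 else pc k + pa k - pd k)"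

lemma FOC_EQS:
  "(FOC_ISP n D0 \<alpha> \<beta> pa pd s pc \<and> FOC_CP n D0 \<alpha> \<beta> pa pd s pc)
    \<longleftrightarrow> EQS n D0 \<alpha> \<beta> pa (Qv pa pd s) (rv pa pd pc)"
proof -
  let ?Q = "Qv pa pd s" and ?r = "rv pa pd pc"
  have P: "\<And>k. k \<in> {1..n} \<Longrightarrow> price s pc k = ?Q k + ?r k - pa k"
    by (auto simp: price_def Qv_def rv_def)
  have "SS n (price s pc) = (\<Sum>k\<in>{1..n}. ?Q k + ?r k - pa k)"
    unfolding SS_def by (intro sum.cong) (auto simp: P)
  also have "\<dots> = SS n ?Q + SS n ?r - SS n pa"
    unfolding SS_def by (simp add: sum.distrib sum_subtractf)
  finally have SP: "SS n (price s pc) = SS n ?Q + SS n ?r - SS n pa" .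
  have D: "\<And>k. k \<in> {1..n} \<Longrightarrow> demand n D0 \<alpha> \<beta> (price s pc) k
      = D0 - (\<alpha>+\<beta>) * (?Q k + ?r k - pa k) + \<beta> * (SS n ?Q + SS n ?r - SS n pa)"
    by (simp add: demand_eq P SP)
  have R: "\<And>k. k \<in> {2..n} \<Longrightarrow> pc k + pa k - pd k = ?r k"
    by (auto simp: rv_def)
  have A: "FOC_ISP n D0 \<alpha> \<beta> pa pd s pc \<longleftrightarrow> (\<forall>k\<in>{1..n}. D0 - (\<alpha>+\<beta>) * (?Q k + ?r k - pa k) + \<beta> * (SS n ?Q + SS n ?r - SS n pa)
        - (\<alpha>+\<beta>) * ?Q k + \<beta> * SS n ?Q = 0)"
    unfolding FOC_ISP_def using D by auto
  have B: "FOC_CP n D0 \<alpha> \<beta> pa pd s pc \<longleftrightarrow> (\<forall>k\<in>{2..n}. D0 - (\<alpha>+\<beta>) * (?Q k + ?r k - pa k) + \<beta> * (SS n ?Q + SS n ?r - SS n pa) = \<alpha> * ?r k)"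
  proof -
    have "\<And>k. k \<in> {2..n} \<Longrightarrow> k \<in> {1..n}" by auto
    then show ?thesis unfolding FOC_CP_def using D R by (auto simp del: atLeastAtMost_iff)
  qed
  show ?thesis unfolding A B EQS_def ..
qed


lemma NE_EQS:
  assumes n: "n \<ge> 2" and b: "\<beta> \<ge> 0" and a: "\<alpha> > (real n - 1) * \<beta>"
  shows "is_NE n D0 \<alpha> \<beta> pa pd s pc \<longleftrightarrow> EQS n D0 \<alpha> \<beta> pa (Qv pa pd s) (rv pa pd pc)"
  using NE_iff[OF assms] FOC_EQS by blast

lemma NE_sol:
  assumes n: "n \<ge> 2" and b: "\<beta> \<ge> 0" and a: "\<alpha> > (real n - 1) * \<beta>"
    and NE: "is_NE n D0 \<alpha> \<beta> pa pd s pc"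
  shows "\<forall>k\<in>{1..n}. Qv pa pd s k = Qstar n D0 \<alpha> \<beta> pa k \<and> rv pa pd pc k = rstar n D0 \<alpha> \<beta> pa k"
  using solve_imp[OF n b a _ NE[unfolded NE_EQS[OF n b a]]] by (simp add: rv_def)

theorem theorem5:
  fixes n :: nat and D0 \<alpha> \<beta> :: real and pa :: "nat \<Rightarrow> real"
  assumes "n \<ge> 2" and "D0 > 0" and "\<beta> \<ge> 0" and "\<alpha> > (real n - 1) * \<beta>"
    and "\<forall>i\<in>{1..n}. pa i \<ge> 0"
  shows
    "(\<forall>pd. \<exists>s pc. is_NE n D0 \<alpha> \<beta> pa pd s pc \<and>
        (\<forall>s' pc'. is_NE n D0 \<alpha> \<beta> pa pd s' pc' \<longrightarrow>
            (\<forall>i\<in>{1..n}. s' i = s i) \<and> (\<forall>i\<in>{2..n}. pc' i = pc i)))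
   \<and> (\<exists>g h Dv rI rC UI UC.
        \<forall>pd s pc. is_NE n D0 \<alpha> \<beta> pa pd s pc \<longrightarrow>
          s 1 = - pa 1 / 2 + D0 / (2 * (\<alpha> - (real n - 1) * \<beta>))
          \<and> (\<forall>i\<in>{2..n}. s i = g i - pd i \<and> pc i = h i + pd i)
          \<and> (\<forall>i\<in>{1..n}. demand n D0 \<alpha> \<beta> (price s pc) i = Dv i)
          \<and> s 1 + pa 1 = rI 1
          \<and> (\<forall>i\<in>{2..n}. s i + pd i = rI i \<and> pc i + pa i - pd i = rC i)
          \<and> U_ISP n D0 \<alpha> \<beta> pa pd s pc = UI
          \<and> (\<forall>i\<in>{2..n}. U_CP n D0 \<alpha> \<beta> pa pd s pc i = UC i))"
proof
  note n = assms(1) and b = assms(3) and a = assms(4)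
  let ?Q = "Qstar n D0 \<alpha> \<beta> pa" and ?r = "rstar n D0 \<alpha> \<beta> pa"
  show "\<forall>pd. \<exists>s pc. is_NE n D0 \<alpha> \<beta> pa pd s pc \<and>
        (\<forall>s' pc'. is_NE n D0 \<alpha> \<beta> pa pd s' pc' \<longrightarrow>
            (\<forall>i\<in>{1..n}. s' i = s i) \<and> (\<forall>i\<in>{2..n}. pc' i = pc i))"
  proof
    fix pd
    define s where "s = (\<lambda>k. if k = 1 then ?Q 1 - pa 1 else ?Q k - pd k)"
    define pc where "pc = (\<lambda>k. ?r k - pa k + pd k)"
    have q: "Qv pa pd s = ?Q" by (auto simp: Qv_def s_def)
    have r: "rv pa pd pc = ?r" by (auto simp: rv_def pc_def rstar_def)
    have NE: "is_NE n D0 \<alpha> \<beta> pa pd s pc"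
      unfolding NE_EQS[OF n b a] q r by (rule solve_rev[OF n b a])
    show "\<exists>s pc. is_NE n D0 \<alpha> \<beta> pa pd s pc \<and>
        (\<forall>s' pc'. is_NE n D0 \<alpha> \<beta> pa pd s' pc' \<longrightarrow>
            (\<forall>i\<in>{1..n}. s' i = s i) \<and> (\<forall>i\<in>{2..n}. pc' i = pc i))"
    proof (intro exI conjI allI impI)
      show "is_NE n D0 \<alpha> \<beta> pa pd s pc" by (rule NE)
    next
      fix s' pc' assume H: "is_NE n D0 \<alpha> \<beta> pa pd s' pc'"
      note S = NE_sol[OF n b a H]
      show "\<forall>i\<in>{1..n}. s' i = s i"
      proof
        fix i assume i: "i \<in> {1..n}"
        then show "s' i = s i" using S unfolding s_def Qv_def by (cases "i = 1") force+
      qed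
      show "\<forall>i\<in>{2..n}. pc' i = pc i"
      proof
        fix i assume i: "i \<in> {2..n}"
        then have "i \<in> {1..n}" "i \<noteq> 1" by auto
        then show "pc' i = pc i" using S unfolding pc_def rv_def by force
      qed
    qed
  qed
  define Dv where "Dv = (\<lambda>k. (\<alpha>+\<beta>) * ?Q k - \<beta> * SS n ?Q)"
  show "\<exists>g h Dv rI rC UI UC.
        \<forall>pd s pc. is_NE n D0 \<alpha> \<beta> pa pd s pc \<longrightarrow>
          s 1 = - pa 1 / 2 + D0 / (2 * (\<alpha> - (real n - 1) * \<beta>))
          \<and> (\<forall>i\<in>{2..n}. s i = g i - pd i \<and> pc i = h i + pd i)
          \<and> (\<forall>i\<in>{1..n}. demand n D0 \<alpha> \<beta> (price s pc) i = Dv i)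
          \<and> s 1 + pa 1 = rI 1
          \<and> (\<forall>i\<in>{2..n}. s i + pd i = rI i \<and> pc i + pa i - pd i = rC i)
          \<and> U_ISP n D0 \<alpha> \<beta> pa pd s pc = UI
          \<and> (\<forall>i\<in>{2..n}. U_CP n D0 \<alpha> \<beta> pa pd s pc i = UC i)"
  proof (intro exI allI impI conjI ballI)
    fix pd s pc assume H: "is_NE n D0 \<alpha> \<beta> pa pd s pc"
    note S = NE_sol[OF n b a H]
    have Qe: "\<And>k. k \<in> {1..n} \<Longrightarrow> Qv pa pd s k = ?Q k" using S by blast
    have re: "\<And>k. k \<in> {2..n} \<Longrightarrow> pc k + pa k - pd k = ?r k"
    proof -
      fix k assume k: "k \<in> {2..n}"
      then have "k \<in> {1..n}" "k \<noteq> 1" by auto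
      then show "pc k + pa k - pd k = ?r k" using S unfolding rv_def by force
    qed
    have one: "(1::nat) \<in> {1..n}" using n by auto
    have s1: "s 1 + pa 1 = ?Q 1" using Qe[OF one] by (simp add: Qv_def)
    moreover have "\<alpha> - (real n - 1) * \<beta> > 0" using a by simp
    ultimately show "s 1 = - pa 1 / 2 + D0 / (2 * (\<alpha> - (real n - 1) * \<beta>))"
      by (simp add: Qstar_def rstar_def Kc_def field_simps)
    show "s 1 + pa 1 = ?Q 1" by (rule s1)
    have FI: "FOC_ISP n D0 \<alpha> \<beta> pa pd s pc" using H NE_iff[OF n b a] by blast
    have SQ: "SS n (Qv pa pd s) = SS n ?Q" unfolding SS_def by (intro sum.cong) (auto simp: Qe)
    have Dm: "\<And>i. i \<in> {1..n} \<Longrightarrow> demand n D0 \<alpha> \<beta> (price s pc) i = Dv i"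
    proof -
      fix i assume i: "i \<in> {1..n}"
      have "demand n D0 \<alpha> \<beta> (price s pc) i - (\<alpha>+\<beta>) * Qv pa pd s i + \<beta> * SS n (Qv pa pd s) = 0"
        using FI i unfolding FOC_ISP_def by blast
      then show "demand n D0 \<alpha> \<beta> (price s pc) i = Dv i"
        unfolding Dv_def SQ Qe[OF i] by linarith
    qed
    fix i
    show "i \<in> {1..n} \<Longrightarrow> demand n D0 \<alpha> \<beta> (price s pc) i = Dv i" by (rule Dm)
    have n1: "1 \<le> n" using n by simp
    show "U_ISP n D0 \<alpha> \<beta> pa pd s pc = (\<Sum>k\<in>{1..n}. Dv k * ?Q k)"
      unfolding U_ISP_alt[OF n1] by (intro sum.cong) (auto simp: Dm Qe)
    assume i: "i \<in> {2..n}"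
    then have i1: "i \<in> {1..n}" "i \<noteq> 1" by auto
    show "s i = ?Q i - pd i" using Qe[OF i1(1)] i1 by (simp add: Qv_def)
    show "pc i = (?r i - pa i) + pd i" using re[OF i] by simp
    show "s i + pd i = ?Q i" using Qe[OF i1(1)] i1 by (simp add: Qv_def)
    show "pc i + pa i - pd i = ?r i" by (rule re[OF i])
    show "U_CP n D0 \<alpha> \<beta> pa pd s pc i = Dv i * ?r i"
      unfolding U_CP_def Dm[OF i1(1)] re[OF i] ..
  qed
qed

end
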